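(* Let $d\ge 1$ and $L\ge 1$ be integers and let $\Phi\in\mathbb{R}^{d\times d}$ be arbitrary. Consider the loss $$\mathcal{R}(W_1,\dots,W_L)=\tfrac12\|W_LW_{L-1}\cdots W_1-\Phi\|_F^2,\qquad W_l\in\mathbb{R}^{d\times d},$$ and the continuous-time gradient descent (gradient flow) $$\dot W_l(t)=-\nabla_l\mathcal{R}(t),\qquad l=1,\dots,L,\ t\ge 0,$$ started from the zero-asymmetric initialization $W_l(0)=I$ for $l=1,\dots,L-1$ and $W_L(0)=0$. Then $$\mathcal{R}(t)\le e^{-2t}\mathcal{R}(0)\qquad\text{for all } t\ge 0.$$
   Context: For $l_2\ge l_1$ write $W_{l_2:l_1}=W_{l_2}W_{l_2-1}\cdots W_{l_1}$, and an empty product (e.g. $W_{0:1}$ or $W_{L:L+1}$) is the identity matrix $I\in\mathbb{R}^{d\times d}$. The gradient of $\mathcal{R}$ with respect to $W_l$ is $\nabla_l\mathcal{R}=W_{L:l+1}^\intercal(W_{L:1}-\Phi)W_{l-1:1}^\intercal$. $\mathcal{R}(t)$ denotes $\mathcal{R}(W_1(t),\dots,W_L(t))$ and $\nabla_l\mathcal{R}(t)$ the gradient evaluated at $(W_1(t),\dots,W_L(t))$. $\|\cdot\|_F$ is the Frobenius norm. *)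

theory Defs
  imports "HOL-Analysis.Analysis"
begin

text \<open>Ordered product W_{hi:lo} = W hi ** W (hi-1) ** ... ** W lo; identity if hi < lo.\<close>
definition mprod :: "(nat \<Rightarrow> real^'n^'n) \<Rightarrow> nat \<Rightarrow> nat \<Rightarrow> real^'n^'n" where
  "mprod W hi lo = foldr (\<lambda>l A. W l ** A) (rev [lo..<Suc hi]) (mat 1)"

definition frob_sq :: "real^'n^'m \<Rightarrow> real" where
  "frob_sq A = (\<Sum>i\<in>UNIV. \<Sum>j\<in>UNIV. (A $ i $ j)^2)"

definition loss :: "nat \<Rightarrow> real^'n^'n \<Rightarrow> (nat \<Rightarrow> real^'n^'n) \<Rightarrow> real" where
  "loss L \<Phi> W = frob_sq (mprod W L 1 - \<Phi>) / 2"

definition grad :: "nat \<Rightarrow> real^'n^'n \<Rightarrow> (nat \<Rightarrow> real^'n^'n) \<Rightarrow> nat \<Rightarrow> real^'n^'n" where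
  "grad L \<Phi> W l = transpose (mprod W L (l+1)) ** (mprod W L 1 - \<Phi>) ** transpose (mprod W (l-1) 1)"

end

theory Submission
  imports Defs
begin

lemma bb_mm: "bounded_bilinear ((**) :: real^'n^'m \<Rightarrow> real^'p^'n \<Rightarrow> real^'p^'m)"
  unfolding bilinear_conv_bounded_bilinear[symmetric] bilinear_def
  by (auto intro!: linearI simp: vec_eq_iff matrix_matrix_mult_def sum_distrib_left
       algebra_simps sum.distrib)

lemma bl_transpose: "bounded_linear (transpose :: real^'n^'m \<Rightarrow> real^'m^'n)"
  unfolding linear_conv_bounded_linear[symmetric]
  by (auto intro!: linearI simp: vec_eq_iff transpose_def)

lemma mprod_empty: "hi < lo \<Longrightarrow> mprod W hi lo = mat 1"
  by (simp add: mprod_def)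

lemma mprod_Suc: "lo \<le> Suc hi \<Longrightarrow> mprod W (Suc hi) lo = W (Suc hi) ** mprod W hi lo"
  by (simp add: mprod_def)

lemma mprod_same: "mprod W l l = W l"
  by (simp add: mprod_def)

lemma mprod_lo: "lo \<le> hi \<Longrightarrow> mprod W hi lo = mprod W hi (Suc lo) ** W lo"
proof (induction hi)
  case 0
  then have "lo = 0" by simp
  then show ?case by (simp add: mprod_same mprod_empty)
next
  case (Suc hi)
  show ?case
  proof (cases "lo = Suc hi")
    case True
    then show ?thesis by (simp add: mprod_same mprod_empty)
  next
    case False
    then have h: "lo \<le> hi" using Suc.prems by simp
    have "mprod W (Suc hi) lo = W (Suc hi) ** mprod W hi lo"
      using Suc.prems by (rule mprod_Suc)
    also have "\<dots> = W (Suc hi) ** (mprod W hi (Suc lo) ** W lo)"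
      using Suc.IH[OF h] by simp
    also have "\<dots> = (W (Suc hi) ** mprod W hi (Suc lo)) ** W lo"
      by (simp add: matrix_mul_assoc)
    also have "W (Suc hi) ** mprod W hi (Suc lo) = mprod W (Suc hi) (Suc lo)"
      using h by (intro mprod_Suc[symmetric]) simp
    finally show ?thesis .
  qed
qed

lemma inner_mm_left: "inner (A::real^'n^'m) (B ** X) = inner (transpose B ** A) X"
  unfolding inner_vec_def matrix_matrix_mult_def transpose_def
  apply (simp add: sum_distrib_left sum_distrib_right inner_real_def mult_ac)
  apply (rule trans[OF sum.cong[OF refl sum.swap]])
  apply (rule trans[OF sum.swap])
  apply (rule sum.cong[OF refl])
  apply (rule trans[OF sum.swap])
  apply (simp add: mult_ac)
  done
lemma inner_mm_right: "inner (A::real^'n^'m) (X ** C) = inner (A ** transpose C) X"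
  unfolding inner_vec_def matrix_matrix_mult_def transpose_def
  apply (simp add: sum_distrib_left sum_distrib_right inner_real_def mult_ac)
  apply (rule sum.cong[OF refl])
  apply (rule trans[OF sum.swap])
  apply (simp add: mult_ac)
  done
lemma inner_mv: "inner (transpose M *v x) y = inner x ((M::real^'n^'m) *v y)"
  unfolding inner_vec_def matrix_vector_mult_def transpose_def
  apply (simp add: sum_distrib_left sum_distrib_right inner_real_def mult_ac)
  apply (rule trans[OF sum.swap])
  apply (simp add: mult_ac)
  done

lemma frob_inner: "frob_sq A = inner A A"
  unfolding frob_sq_def inner_vec_def by (simp add: inner_real_def power2_eq_square)


lemma transpose_neg: "transpose (- (A::real^'n^'m)) = - transpose A"
  by (simp add: vec_eq_iff transpose_def)

lemma mprod_deriv: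
  fixes V :: "real \<Rightarrow> nat \<Rightarrow> real^'n^'n"
  assumes lo: "1 \<le> lo"
    and d: "\<And>l. lo \<le> l \<Longrightarrow> l \<le> hi \<Longrightarrow> ((\<lambda>s. V s l) has_vector_derivative V' l) (at t within S)"
  shows "((\<lambda>s. mprod (V s) hi lo) has_vector_derivative
     (\<Sum>l\<in>{lo..hi}. mprod (V t) hi (Suc l) ** V' l ** mprod (V t) (l - 1) lo)) (at t within S)"
  using d
proof (induction hi)
  case 0
  have "(0::nat) < lo" using lo by simp
  then show ?case by (simp add: mprod_empty)
next
  case (Suc hi)
  show ?case
  proof (cases "Suc hi < lo")
    case True then show ?thesis by (simp add: mprod_empty)
  next
    case False
    then have le: "lo \<le> Suc hi" by simp
    have IH: "((\<lambda>s. mprod (V s) hi lo) has_vector_derivative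
     (\<Sum>l\<in>{lo..hi}. mprod (V t) hi (Suc l) ** V' l ** mprod (V t) (l - 1) lo)) (at t within S)"
      using Suc.IH Suc.prems by simp
    have dW: "((\<lambda>s. V s (Suc hi)) has_vector_derivative V' (Suc hi)) (at t within S)"
      using Suc.prems le by simp
    have P: "((\<lambda>s. V s (Suc hi) ** mprod (V s) hi lo) has_vector_derivative
        (V t (Suc hi) ** (\<Sum>l\<in>{lo..hi}. mprod (V t) hi (Suc l) ** V' l ** mprod (V t) (l - 1) lo)
          + V' (Suc hi) ** mprod (V t) hi lo)) (at t within S)"
      by (rule bounded_bilinear.has_vector_derivative[OF bb_mm dW IH])
    have eq: "(\<lambda>s. mprod (V s) (Suc hi) lo) = (\<lambda>s. V s (Suc hi) ** mprod (V s) hi lo)"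
      using le by (simp add: mprod_Suc)
    have sm: "(\<Sum>l\<in>{lo..Suc hi}. mprod (V t) (Suc hi) (Suc l) ** V' l ** mprod (V t) (l - 1) lo)
      = V t (Suc hi) ** (\<Sum>l\<in>{lo..hi}. mprod (V t) hi (Suc l) ** V' l ** mprod (V t) (l - 1) lo)
          + V' (Suc hi) ** mprod (V t) hi lo"
    proof -
      have "(\<Sum>l\<in>{lo..Suc hi}. mprod (V t) (Suc hi) (Suc l) ** V' l ** mprod (V t) (l - 1) lo)
        = mprod (V t) (Suc hi) (Suc (Suc hi)) ** V' (Suc hi) ** mprod (V t) (Suc hi - 1) lo
          + (\<Sum>l\<in>{lo..hi}. mprod (V t) (Suc hi) (Suc l) ** V' l ** mprod (V t) (l - 1) lo)"
        using le by (simp add: atLeastAtMostSuc_conv)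
      also have "(\<Sum>l\<in>{lo..hi}. mprod (V t) (Suc hi) (Suc l) ** V' l ** mprod (V t) (l - 1) lo)
        = (\<Sum>l\<in>{lo..hi}. V t (Suc hi) ** (mprod (V t) hi (Suc l) ** V' l ** mprod (V t) (l - 1) lo))"
        by (rule sum.cong) (auto simp: mprod_Suc matrix_mul_assoc)
      also have "\<dots> = V t (Suc hi) ** (\<Sum>l\<in>{lo..hi}. mprod (V t) hi (Suc l) ** V' l ** mprod (V t) (l - 1) lo)"
        by (rule bounded_bilinear.sum_right[OF bb_mm, symmetric])
      finally show ?thesis by (simp add: mprod_empty add.commute)
    qed
    show ?thesis unfolding eq sm by (rule P)
  qed
qed

lemma G_transpose:
  fixes M :: "real^'n^'n"
  assumes G: "\<And>x. norm x \<le> norm (transpose M *v x)"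
  shows "norm y \<le> norm (M *v y)"
proof -
  let ?f = "\<lambda>x. transpose M *v x"
  have lin: "linear ?f" by (rule matrix_vector_mul_linear)
  have "inj ?f" unfolding linear_injective_0[OF lin]
  proof (intro allI impI)
    fix x assume "transpose M *v x = 0"
    then have "norm x \<le> 0" using G[of x] by simp
    then show "x = 0" by simp
  qed
  hence "surj ?f" using linear_injective_imp_surjective[OF lin] by blast
  then obtain x where x: "y = transpose M *v x" by blast
  have "norm y ^ 2 = inner y y" by (simp add: power2_norm_eq_inner)
  also have "\<dots> = inner (transpose M *v x) y" using x by simp
  also have "\<dots> = inner x (M *v y)" by (rule inner_mv)
  also have "\<dots> \<le> norm x * norm (M *v y)" by (rule norm_cauchy_schwarz)
  also have "\<dots> \<le> norm y * norm (M *v y)" using G[of x] x by (simp add: mult_right_mono)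
  finally have "norm y * norm y \<le> norm y * norm (M *v y)" by (simp add: power2_eq_square)
  then show ?thesis
    by (cases "norm y = 0") (auto simp: mult_le_cancel_left_pos)
qed

lemma norm_mv_sq: "norm ((M::real^'n^'m) *v x) ^ 2 = inner x ((transpose M ** M) *v x)"
  using inner_mv[of "transpose M" x "M *v x"]
  by (simp add: power2_norm_eq_inner matrix_vector_mul_assoc)

lemma inner_rows: "inner (A::real^'n^'m) A = (\<Sum>i\<in>UNIV. inner (A $ i) (A $ i))"
  by (simp only: inner_vec_def)

lemma frob_lower:
  fixes E P :: "real^'n^'n"
  assumes G: "\<And>x. norm x \<le> norm (P *v x)"
  shows "inner E E \<le> inner (E ** transpose P) (E ** transpose P)"
proof -
  have row: "(E ** transpose P) $ i = P *v (E $ i)" for i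
    by (simp add: vec_eq_iff matrix_matrix_mult_def matrix_vector_mult_def transpose_def mult.commute)
  have "inner (E $ i) (E $ i) \<le> inner (P *v (E $ i)) (P *v (E $ i))" for i
  proof -
    have "norm (E $ i) ^ 2 \<le> norm (P *v (E $ i)) ^ 2"
      using G[of "E $ i"] by (simp add: power_mono)
    then show ?thesis by (simp add: power2_norm_eq_inner)
  qed
  then show ?thesis unfolding inner_rows[of E] inner_rows[of "E ** transpose P"] row
    by (rule sum_mono)
qed


theorem theorem1:
  fixes L :: nat and \<Phi> :: "real^'n^'n" and W :: "real \<Rightarrow> nat \<Rightarrow> real^'n^'n"
  assumes L: "L \<ge> 1"
    and flow: "\<And>t l. t \<ge> 0 \<Longrightarrow> 1 \<le> l \<Longrightarrow> l \<le> L \<Longrightarrow>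
               ((\<lambda>s. W s l) has_vector_derivative (- grad L \<Phi> (W t) l)) (at t within {0..})"
    and init_id: "\<And>l. 1 \<le> l \<Longrightarrow> l < L \<Longrightarrow> W 0 l = mat 1"
    and init_zero: "W 0 L = 0"
  shows "\<forall>t\<ge>0. loss L \<Phi> (W t) \<le> exp (-2 * t) * loss L \<Phi> (W 0)"
proof -
  define g where "g s l = grad L \<Phi> (W s) l" for s l
  have key: "transpose (W s (Suc l)) ** g s (Suc l) = g s l ** transpose (W s l)"
    if lh: "1 \<le> l" "l < L" for s l
  proof -
    obtain k where k: "l = Suc k" using lh by (cases l) auto
    have a: "transpose (W s (Suc l)) ** transpose (mprod (W s) L (Suc (Suc l)))
        = transpose (mprod (W s) L (Suc l))"
      using mprod_lo[of "Suc l" L "W s"] lh by (simp add: matrix_transpose_mul)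
    have b: "transpose (mprod (W s) k 1) ** transpose (W s l) = transpose (mprod (W s) l 1)"
      using mprod_Suc[of 1 k "W s"] k by (simp add: matrix_transpose_mul)
    have "transpose (W s (Suc l)) ** g s (Suc l)
       = (transpose (W s (Suc l)) ** transpose (mprod (W s) L (Suc (Suc l))))
          ** (mprod (W s) L 1 - \<Phi>) ** transpose (mprod (W s) l 1)"
      by (simp add: g_def grad_def matrix_mul_assoc)
    also have "\<dots> = transpose (mprod (W s) L (Suc l)) ** (mprod (W s) L 1 - \<Phi>)
          ** (transpose (mprod (W s) k 1) ** transpose (W s l))"
      unfolding a b by simp
    also have "\<dots> = g s l ** transpose (W s l)"
      by (simp add: g_def grad_def matrix_mul_assoc k)
    finally show ?thesis .
  qed
  have inv: "transpose (W s (Suc l)) ** W s (Suc l) - W s l ** transpose (W s l)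
     = transpose (W 0 (Suc l)) ** W 0 (Suc l) - W 0 l ** transpose (W 0 l)"
    if l: "1 \<le> l" "l < L" and s: "0 \<le> s" for s l
  proof -
    let ?f = "\<lambda>s. transpose (W s (Suc l)) ** W s (Suc l) - W s l ** transpose (W s l)"
    have "\<exists>c. \<forall>x\<in>{0..}. ?f x = c"
    proof (rule has_derivative_zero_constant)
      show "convex {0::real..}" by simp
      fix x :: real assume x: "x \<in> {0..}"
      have d1: "((\<lambda>s. W s (Suc l)) has_vector_derivative - g x (Suc l)) (at x within {0..})"
        using flow[of x "Suc l"] l x by (simp add: g_def)
      have d2: "((\<lambda>s. W s l) has_vector_derivative - g x l) (at x within {0..})"
        using flow[of x l] l x by (simp add: g_def)
      have t1: "((\<lambda>s. transpose (W s (Suc l))) has_vector_derivative transpose (- g x (Suc l))) (at x within {0..})"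
        by (rule bounded_linear.has_vector_derivative[OF bl_transpose d1])
      have t2: "((\<lambda>s. transpose (W s l)) has_vector_derivative transpose (- g x l)) (at x within {0..})"
        by (rule bounded_linear.has_vector_derivative[OF bl_transpose d2])
      note p1 = bounded_bilinear.has_vector_derivative[OF bb_mm t1 d1]
      note p2 = bounded_bilinear.has_vector_derivative[OF bb_mm d2 t2]
      define X where "X = transpose (W x (Suc l)) ** g x (Suc l)"
      have X1: "g x l ** transpose (W x l) = X" using key[OF l] X_def by simp
      have X2: "transpose (g x (Suc l)) ** W x (Suc l) = transpose X"
        unfolding X_def by (simp add: matrix_transpose_mul)
      have X3: "W x l ** transpose (g x l) = transpose X"
        unfolding X1[symmetric] by (simp add: matrix_transpose_mul)
      have "(?f has_vector_derivative
          ((transpose (W x (Suc l)) ** (- g x (Suc l)) + transpose (- g x (Suc l)) ** W x (Suc l))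
          - (W x l ** transpose (- g x l) + (- g x l) ** transpose (W x l)))) (at x within {0..})"
        by (rule has_vector_derivative_diff[OF p1 p2])
      moreover have "(transpose (W x (Suc l)) ** (- g x (Suc l)) + transpose (- g x (Suc l)) ** W x (Suc l))
          - (W x l ** transpose (- g x l) + (- g x l) ** transpose (W x l)) = 0"
        using X1 X2 X3 X_def
        by (simp add: transpose_neg bounded_bilinear.minus_right[OF bb_mm]
            bounded_bilinear.minus_left[OF bb_mm])
      ultimately show "(?f has_derivative (\<lambda>h. 0)) (at x within {0..})"
        by (simp add: has_vector_derivative_def)
    qed
    then obtain c where "\<forall>x\<in>{0..}. ?f x = c" by blast
    then show ?thesis using s by simp
  qed
  have G: "norm x \<le> norm (mprod (W s) (L - 1) 1 *v x)" if s: "0 \<le> s" for s x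
  proof (cases "L = 1")
    case True then show ?thesis by (simp add: mprod_empty)
  next
    case False
    then have L2: "2 \<le> L" using L by simp
    have SL: "Suc (L - 1) = L" using L2 by simp
    have top: "W s (L - 1) ** transpose (W s (L - 1)) = transpose (W s L) ** W s L + mat 1"
    proof -
      have "transpose (W s L) ** W s L - W s (L - 1) ** transpose (W s (L - 1))
          = transpose (W 0 L) ** W 0 L - W 0 (L - 1) ** transpose (W 0 (L - 1))"
        using inv[of "L - 1" s] L2 s SL by simp
      also have "\<dots> = - mat 1" using init_zero init_id[of "L - 1"] L2 by simp
      finally have h: "transpose (W s L) ** W s L - W s (L - 1) ** transpose (W s (L - 1)) = - mat 1" .
      have "W s (L - 1) ** transpose (W s (L - 1)) = transpose (W s L) ** W s L
          - (transpose (W s L) ** W s L - W s (L - 1) ** transpose (W s (L - 1)))" by simp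
      also have "\<dots> = transpose (W s L) ** W s L + mat 1" unfolding h by simp
      finally show ?thesis .
    qed
    have mid: "W s l ** transpose (W s l) = transpose (W s (Suc l)) ** W s (Suc l)"
      if "1 \<le> l" "Suc l < L" for l
      using inv[of l s] that init_id[of l] init_id[of "Suc l"] s by simp
    have Gk: "\<forall>x. norm x \<le> norm (W s (L - 1 - k) *v x)" if "k \<le> L - 2" for k
      using that
    proof (induction k)
      case 0
      have "norm x \<le> norm (transpose (W s (L - 1)) *v x)" for x
      proof -
        have "norm (transpose (W s (L - 1)) *v x) ^ 2
            = inner x ((W s (L - 1) ** transpose (W s (L - 1))) *v x)"
          by (simp add: norm_mv_sq del: transpose_matrix_vector)
        also have "\<dots> = inner x ((transpose (W s L) ** W s L) *v x) + inner x x"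
          unfolding top by (simp add: matrix_vector_mult_add_rdistrib inner_add_right)
        also have "\<dots> = norm (W s L *v x) ^ 2 + norm x ^ 2"
          unfolding norm_mv_sq by (simp add: power2_norm_eq_inner)
        finally have "norm x ^ 2 \<le> norm (transpose (W s (L - 1)) *v x) ^ 2" by simp
        then show ?thesis by (rule power2_le_imp_le) simp
      qed
      then show ?case using G_transpose by (metis minus_nat.diff_0)
    next
      case (Suc k)
      define l where "l = L - 1 - Suc k"
      have l1: "1 \<le> l" "Suc l < L" using Suc.prems L2 unfolding l_def by auto
      have lk: "Suc l = L - 1 - k" using Suc.prems L2 unfolding l_def by auto
      have IH: "\<forall>x. norm x \<le> norm (W s (Suc l) *v x)" using Suc.IH Suc.prems lk by simp
      have "norm x \<le> norm (transpose (W s l) *v x)" for x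
      proof -
        have "norm (transpose (W s l) *v x) ^ 2
            = inner x ((W s l ** transpose (W s l)) *v x)"
          by (simp add: norm_mv_sq del: transpose_matrix_vector)
        also have "\<dots> = norm (W s (Suc l) *v x) ^ 2"
          unfolding mid[OF l1] by (simp add: norm_mv_sq)
        finally have "norm x ^ 2 \<le> norm (transpose (W s l) *v x) ^ 2"
          using IH by (simp add: power_mono)
        then show ?thesis by (rule power2_le_imp_le) simp
      qed
      then show ?case using G_transpose unfolding l_def by blast
    qed
    have Gl: "\<forall>x. norm x \<le> norm (W s l *v x)" if "1 \<le> l" "l \<le> L - 1" for l
      using Gk[of "L - 1 - l"] that by simp
    have "\<forall>x. norm x \<le> norm (mprod (W s) k 1 *v x)" if "k \<le> L - 1" for k
      using that
    proof (induction k)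
      case 0 then show ?case by (simp add: mprod_empty)
    next
      case (Suc k)
      show ?case
      proof
        fix x
        have "norm x \<le> norm (mprod (W s) k 1 *v x)" using Suc by simp
        also have "\<dots> \<le> norm (W s (Suc k) *v (mprod (W s) k 1 *v x))"
          using Gl[of "Suc k"] Suc.prems by simp
        finally show "norm x \<le> norm (mprod (W s) (Suc k) 1 *v x)"
          by (simp add: mprod_Suc matrix_vector_mul_assoc)
      qed
    qed
    then show ?thesis by simp
  qed
  define Q where "Q s = inner (mprod (W s) L 1 - \<Phi>) (mprod (W s) L 1 - \<Phi>)" for s
  have dQ: "\<exists>Q'. (Q has_real_derivative Q') (at s within {0..}) \<and> Q' \<le> -2 * Q s"
    if s: "0 \<le> s" for s
  proof -
    let ?E = "mprod (W s) L 1 - \<Phi>"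
    let ?E' = "\<Sum>l\<in>{1..L}. mprod (W s) L (Suc l) ** (- g s l) ** mprod (W s) (l - 1) 1"
    have dM: "((\<lambda>r. mprod (W r) L 1) has_vector_derivative ?E') (at s within {0..})"
      by (rule mprod_deriv) (auto simp: g_def flow s)
    have dE: "((\<lambda>r. mprod (W r) L 1 - \<Phi>) has_vector_derivative ?E') (at s within {0..})"
      using has_vector_derivative_diff[OF dM has_vector_derivative_const[of \<Phi>]] by simp
    have dQv: "(Q has_vector_derivative (inner ?E ?E' + inner ?E' ?E)) (at s within {0..})"
      unfolding Q_def[abs_def]
      by (rule bounded_bilinear.has_vector_derivative[OF bounded_bilinear_inner dE dE])
    have trm: "inner ?E (mprod (W s) L (Suc l) ** (- g s l) ** mprod (W s) (l - 1) 1)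
        = - inner (g s l) (g s l)" for l
    proof -
      have "inner ?E (mprod (W s) L (Suc l) ** (- g s l) ** mprod (W s) (l - 1) 1)
          = inner (transpose (mprod (W s) L (Suc l)) ** (?E ** transpose (mprod (W s) (l - 1) 1))) (- g s l)"
        unfolding inner_mm_right[of ?E] inner_mm_left[of "?E ** transpose (mprod (W s) (l - 1) 1)"] ..
      also have "\<dots> = inner (g s l) (- g s l)"
        by (simp add: g_def grad_def matrix_mul_assoc)
      finally show ?thesis by simp
    qed
    have val: "inner ?E ?E' = - (\<Sum>l\<in>{1..L}. inner (g s l) (g s l))"
      unfolding inner_sum_right trm by (simp add: sum_negf)
    have gL: "g s L = ?E ** transpose (mprod (W s) (L - 1) 1)"
      by (simp add: g_def grad_def mprod_empty)
    have low: "Q s \<le> inner (g s L) (g s L)"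
      unfolding gL Q_def by (rule frob_lower[OF G[OF s]])
    have "inner (g s L) (g s L) \<le> (\<Sum>l\<in>{1..L}. inner (g s l) (g s l))"
      by (rule member_le_sum) (use L in auto)
    then have "inner ?E ?E' + inner ?E' ?E \<le> -2 * Q s"
      using low val by (simp add: inner_commute)
    moreover have "(Q has_real_derivative (inner ?E ?E' + inner ?E' ?E)) (at s within {0..})"
      using dQv by (simp add: has_real_derivative_iff_has_vector_derivative)
    ultimately show ?thesis by blast
  qed
  then obtain Qd where Qd: "\<And>s. 0 \<le> s \<Longrightarrow> (Q has_real_derivative Qd s) (at s within {0..}) \<and> Qd s \<le> -2 * Q s"
    by metis
  show ?thesis
  proof (intro allI impI)
    fix t :: real assume t: "0 \<le> t"
    define h where "h r = exp (2 * r) * Q r" for r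
    define D where "D x = exp (2 * x) * 2 * Q x + exp (2 * x) * Qd x" for x
    have hd: "(h has_real_derivative D x) (at x within {0..t})" if x: "0 \<le> x" "x \<le> t" for x
    proof -
      have e: "((\<lambda>r. exp (2 * r)) has_real_derivative exp (2 * x) * 2) (at x within {0..})"
        by (auto intro!: derivative_eq_intros)
      have "(h has_real_derivative D x) (at x within {0..})"
        unfolding h_def[abs_def] D_def
        using DERIV_mult[OF e conjunct1[OF Qd[OF x(1)]]] by (simp add: algebra_simps)
      then show ?thesis by (rule has_field_derivative_subset) auto
    qed
    have Dn: "D x \<le> 0" if "0 \<le> x" for x
    proof -
      have "2 * Q x + Qd x \<le> 0" using Qd[OF that] by simp
      then have "exp (2 * x) * (2 * Q x + Qd x) \<le> 0"
        by (simp add: mult_nonpos_nonneg mult_le_0_iff)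
      then show ?thesis unfolding D_def by (simp add: algebra_simps)
    qed
    obtain x where x: "x \<in> {0..t}" "h t - h 0 = D x * (t - 0)"
      using mvt_very_simple[of 0 t h "\<lambda>x d. D x * d"] t hd
      unfolding has_field_derivative_def by auto
    have "D x * t \<le> 0" using x Dn[of x] t by (simp add: mult_nonpos_nonneg)
    then have "h t \<le> h 0" using x by simp
    then have "exp (2 * t) * Q t \<le> Q 0" unfolding h_def by simp
    then have "exp (-2 * t) * (exp (2 * t) * Q t) \<le> exp (-2 * t) * Q 0"
      by (simp add: mult_left_mono)
    then have "Q t \<le> exp (-2 * t) * Q 0"
      by (simp add: mult.assoc[symmetric] exp_add[symmetric])
    then show "loss L \<Phi> (W t) \<le> exp (-2 * t) * loss L \<Phi> (W 0)"
      unfolding loss_def frob_inner Q_def by simp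
  qed
qed

end
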